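(* Let $n\ge 2$ be an integer and define $\tau_i=-2\sin\frac{i\pi}{2n}$ for $0\le i\le n$. Let $S\in\mathbb{R}^{(n-1)\times(n-1)}$ be the matrix with columns $\bm s_1,\dots,\bm s_{n-1}$, where $\bm s_j=\big(\sin\frac{j\pi}{n},\sin\frac{2j\pi}{n},\dots,\sin\frac{(n-1)j\pi}{n}\big)^{\mathsf T}$. Let $C\in\mathbb{R}^{n\times n}$ be the matrix with columns $\bm c_0,\dots,\bm c_{n-1}$, where $\bm c_j=\nu_j\big(\cos\frac{j\pi}{2n},\cos\frac{3j\pi}{2n},\dots,\cos\frac{(2n-1)j\pi}{2n}\big)^{\mathsf T}$, with $\nu_0=\frac{1}{\sqrt2}$ and $\nu_j=1$ for $1\le j\le n-1$. Let $B\in\mathbb{R}^{(n-1)\times n}$ be the matrix with entries $B_{i,i}=-1$, $B_{i,i+1}=1$ for $1\le i\le n-1$ and all other entries $0$. Then $$S^{-1}BC=SBC^{-\mathsf T}=\Gamma,$$ where $\Gamma=[\bm 0,\Lambda]\in\mathbb{R}^{(n-1)\times n}$, $\bm 0$ is the zero column of length $n-1$, and $\Lambda=\mathrm{diag}(\tau_1,\dots,\tau_{n-1})$.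
   Context: $C^{-\mathsf T}$ denotes the inverse of the transpose of $C$. *)

theory Defs
  imports Complex_Main "Jordan_Normal_Form.Matrix"
begin

(* The (two-sided) inverse of a square matrix; meaningful when invertible_mat A. *)
definition mat_inv :: "'a :: semiring_1 mat \<Rightarrow> 'a mat" where
  "mat_inv A = (SOME B. B \<in> carrier_mat (dim_row A) (dim_row A) \<and> inverts_mat A B \<and> inverts_mat B A)"

(* All matrices below use 0-based indices (JNF convention); paper index k corresponds to k-1
   for rows/columns of S, B, Gamma-rows, and columns c_0..c_{n-1} of C correspond to 0..n-1. *)

definition tau :: "nat \<Rightarrow> nat \<Rightarrow> real" where
  "tau n i = - 2 * sin (real i * pi / (2 * real n))"

definition S_mat :: "nat \<Rightarrow> real mat" where
  "S_mat n = mat (n - 1) (n - 1) (\<lambda>(i, j). sin (real (i + 1) * real (j + 1) * pi / real n))"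

definition nu :: "nat \<Rightarrow> real" where
  "nu j = (if j = 0 then 1 / sqrt 2 else 1)"

definition C_mat :: "nat \<Rightarrow> real mat" where
  "C_mat n = mat n n (\<lambda>(i, j). nu j * cos (real (2 * i + 1) * real j * pi / (2 * real n)))"

definition B_mat :: "nat \<Rightarrow> real mat" where
  "B_mat n = mat (n - 1) n (\<lambda>(i, j). if j = i then -1 else if j = i + 1 then 1 else 0)"

definition Gamma_mat :: "nat \<Rightarrow> real mat" where
  "Gamma_mat n = mat (n - 1) n (\<lambda>(i, j). if j = i + 1 then tau n (i + 1) else 0)"

end

theory Submission imports Defs "Jordan_Normal_Form.Determinant" begin

lemma cos_sum_tel:
  fixes y :: real
  shows "2 * sin (y/2) * (\<Sum>k<N. cos (real k * y)) = sin ((real N - 1/2) * y) + sin (y/2)"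
proof (induction N)
  case 0 then show ?case by simp
next
  case (Suc N)
  have e: "2 * sin (y/2) * cos (real N * y) = sin ((real N + 1/2) * y) - sin ((real N - 1/2) * y)"
  proof -
    have "sin ((real N + 1/2) * y) = sin (real N * y + y/2)" by (simp add: algebra_simps)
    moreover have "sin ((real N - 1/2) * y) = sin (real N * y - y/2)" by (simp add: algebra_simps)
    ultimately show ?thesis by (simp add: sin_add sin_diff)
  qed
  show ?case using Suc e by (simp add: algebra_simps)
qed

lemma cos_sum_nat:
  fixes d n :: nat
  assumes "0 < d" "d < 2*n"
  shows "(\<Sum>k<n. cos (real k * (real d * pi / real n))) = (if even d then 0 else 1)"
proof -
  define y where "y = real d * pi / real n"
  have n0: "n > 0" using assms by simp
  have "0 < y/2" using assms n0 by (simp add: y_def)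
  moreover have "y/2 < pi" using assms n0 by (simp add: y_def field_simps)
  ultimately have s: "sin (y/2) > 0" by (rule sin_gt_zero)
  have "(real n - 1/2) * y = real d * pi - y/2" using n0 by (simp add: y_def field_simps)
  hence "sin ((real n - 1/2) * y) = - ((-1)^d) * sin (y/2)" by (simp add: sin_diff)
  with cos_sum_tel[of y n] have "2 * sin (y/2) * (\<Sum>k<n. cos (real k * y)) = (1 - (-1)^d) * sin (y/2)"
    by (simp add: algebra_simps)
  hence "2 * (\<Sum>k<n. cos (real k * y)) = (1 - (-1)^d)" using s by simp
  thus ?thesis unfolding y_def by (cases "even d") auto
qed

lemma cos_odd_tel:
  fixes x :: real
  shows "2 * sin x * (\<Sum>i<N. cos (real (2*i+1) * x)) = sin (real (2*N) * x)"
proof (induction N)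
  case 0 then show ?case by simp
next
  case (Suc N)
  have e: "2 * sin x * cos (real (2*N+1) * x) = sin (real (2*Suc N) * x) - sin (real (2*N) * x)"
  proof -
    have "sin (real (2*Suc N) * x) = sin (real (2*N+1) * x + x)" by (simp add: algebra_simps)
    moreover have "sin (real (2*N) * x) = sin (real (2*N+1) * x - x)" by (simp add: algebra_simps)
    ultimately show ?thesis by (simp add: sin_add sin_diff)
  qed
  show ?case using Suc e by (simp add: algebra_simps)
qed

lemma cos_odd_sum_nat:
  fixes d n :: nat
  assumes "0 < d" "d < 2*n"
  shows "(\<Sum>i<n. cos (real (2*i+1) * (real d * pi / (2 * real n)))) = 0"
proof -
  define x where "x = real d * pi / (2 * real n)"
  have n0: "n > 0" using assms by simp
  have "0 < x" using assms n0 by (simp add: x_def)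
  moreover have "x < pi" using assms n0 by (simp add: x_def field_simps)
  ultimately have s: "sin x > 0" by (rule sin_gt_zero)
  have "real (2*n) * x = real d * pi" using n0 by (simp add: x_def field_simps)
  hence "sin (real (2*n) * x) = 0" by simp
  with cos_odd_tel[of x n] s show ?thesis unfolding x_def[symmetric] by simp
qed

lemma S_orth_le:
  fixes n a b :: nat
  assumes "1 \<le> b" "b \<le> a" "a < n"
  shows "(\<Sum>k<n. sin (real a * real k * pi / real n) * sin (real b * real k * pi / real n))
     = (if a = b then real n / 2 else 0)"
proof -
  have t: "sin (real a * real k * pi / real n) * sin (real b * real k * pi / real n)
     = (cos (real k * (real (a-b) * pi / real n)) - cos (real k * (real (a+b) * pi / real n))) / 2" for k
  proof -
    define A where "A = real a * real k * pi / real n"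
    define B where "B = real b * real k * pi / real n"
    have 1: "real k * (real (a-b) * pi / real n) = A - B" using assms
      by (simp add: A_def B_def of_nat_diff field_simps)
    have 2: "real k * (real (a+b) * pi / real n) = A + B"
      using assms by (simp add: A_def B_def field_simps)
    show ?thesis unfolding 1 2 A_def[symmetric] B_def[symmetric] by (simp add: cos_diff cos_add)
  qed
  have "(\<Sum>k<n. sin (real a * real k * pi / real n) * sin (real b * real k * pi / real n))
     = ((\<Sum>k<n. cos (real k * (real (a-b) * pi / real n))) - (\<Sum>k<n. cos (real k * (real (a+b) * pi / real n)))) / 2"
    unfolding t by (simp only: sum_divide_distrib[symmetric] sum_subtractf)
  also have "\<dots> = (if a = b then real n / 2 else 0)"
  proof (cases "a = b")
    case True
    have "(\<Sum>k<n. cos (real k * (real (a+b) * pi / real n))) = 0"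
      using cos_sum_nat[of "a+b" n] assms True by simp
    then show ?thesis using True by simp
  next
    case False
    have "(\<Sum>k<n. cos (real k * (real (a-b) * pi / real n))) = (if even (a-b) then 0 else 1)"
      using cos_sum_nat[of "a-b" n] assms False by simp
    moreover have "(\<Sum>k<n. cos (real k * (real (a+b) * pi / real n))) = (if even (a+b) then 0 else 1)"
      using cos_sum_nat[of "a+b" n] assms False by simp
    moreover have "even (a-b) = even (a+b)"
    proof -
      have "a + b = (a - b) + 2 * b" using assms by simp
      then show ?thesis by simp
    qed
    ultimately show ?thesis using False by simp
  qed
  finally show ?thesis .
qed

lemma S_orth:
  fixes n a b :: nat
  assumes "1 \<le> a" "a < n" "1 \<le> b" "b < n"
  shows "(\<Sum>k<n. sin (real a * real k * pi / real n) * sin (real b * real k * pi / real n))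
     = (if a = b then real n / 2 else 0)"
proof (cases "b \<le> a")
  case True then show ?thesis using S_orth_le assms by simp
next
  case False
  then have h: "(\<Sum>k<n. sin (real b * real k * pi / real n) * sin (real a * real k * pi / real n))
     = (if b = a then real n / 2 else 0)" using S_orth_le assms by simp
  have e: "(\<Sum>k<n. sin (real a * real k * pi / real n) * sin (real b * real k * pi / real n))
     = (\<Sum>k<n. sin (real b * real k * pi / real n) * sin (real a * real k * pi / real n))"
    by (rule sum.cong[OF refl], rule mult.commute)
  show ?thesis unfolding e h by (cases "a = b") simp_all
qed

lemma C_orth_le:
  fixes n a b :: nat
  assumes "b \<le> a" "a < n"
  shows "(\<Sum>i<n. cos (real (2*i+1) * real a * pi / (2 * real n)) * cos (real (2*i+1) * real b * pi / (2 * real n)))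
     = (if a = b then (if a = 0 then real n else real n / 2) else 0)"
proof -
  have t: "cos (real (2*i+1) * real a * pi / (2 * real n)) * cos (real (2*i+1) * real b * pi / (2 * real n))
     = (cos (real (2*i+1) * (real (a-b) * pi / (2 * real n))) + cos (real (2*i+1) * (real (a+b) * pi / (2 * real n)))) / 2" for i
  proof -
    define A where "A = real (2*i+1) * real a * pi / (2 * real n)"
    define B where "B = real (2*i+1) * real b * pi / (2 * real n)"
    have 1: "real (2*i+1) * (real (a-b) * pi / (2 * real n)) = A - B" using assms
      by (simp add: A_def B_def of_nat_diff field_simps)
    have 2: "real (2*i+1) * (real (a+b) * pi / (2 * real n)) = A + B"
      using assms by (simp add: A_def B_def field_simps)
    show ?thesis unfolding 1 2 A_def[symmetric] B_def[symmetric] by (simp add: cos_diff cos_add)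
  qed
  have "(\<Sum>i<n. cos (real (2*i+1) * real a * pi / (2 * real n)) * cos (real (2*i+1) * real b * pi / (2 * real n)))
     = ((\<Sum>i<n. cos (real (2*i+1) * (real (a-b) * pi / (2 * real n)))) + (\<Sum>i<n. cos (real (2*i+1) * (real (a+b) * pi / (2 * real n))))) / 2"
    unfolding t by (simp only: sum_divide_distrib[symmetric] sum.distrib)
  also have "\<dots> = (if a = b then (if a = 0 then real n else real n / 2) else 0)"
  proof (cases "a = b")
    case True
    show ?thesis
    proof (cases "a = 0")
      case True then show ?thesis using \<open>a = b\<close> by simp
    next
      case False
      have "(\<Sum>i<n. cos (real (2*i+1) * (real (a+b) * pi / (2 * real n)))) = 0"
        using cos_odd_sum_nat[of "a+b" n] assms False \<open>a = b\<close> by simp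
      then show ?thesis using \<open>a = b\<close> False by simp
    qed
  next
    case False
    have "(\<Sum>i<n. cos (real (2*i+1) * (real (a-b) * pi / (2 * real n)))) = 0"
      using cos_odd_sum_nat[of "a-b" n] assms False by simp
    moreover have "(\<Sum>i<n. cos (real (2*i+1) * (real (a+b) * pi / (2 * real n)))) = 0"
      using cos_odd_sum_nat[of "a+b" n] assms False by simp
    ultimately show ?thesis using False by simp
  qed
  finally show ?thesis .
qed

lemma C_orth:
  fixes n a b :: nat
  assumes "a < n" "b < n"
  shows "(\<Sum>i<n. cos (real (2*i+1) * real a * pi / (2 * real n)) * cos (real (2*i+1) * real b * pi / (2 * real n)))
     = (if a = b then (if a = 0 then real n else real n / 2) else 0)"
proof (cases "b \<le> a")
  case True then show ?thesis using C_orth_le assms by simp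
next
  case False
  then have h: "(\<Sum>i<n. cos (real (2*i+1) * real b * pi / (2 * real n)) * cos (real (2*i+1) * real a * pi / (2 * real n)))
     = (if b = a then (if b = 0 then real n else real n / 2) else 0)" using C_orth_le assms by simp
  have e: "(\<Sum>i<n. cos (real (2*i+1) * real a * pi / (2 * real n)) * cos (real (2*i+1) * real b * pi / (2 * real n)))
     = (\<Sum>i<n. cos (real (2*i+1) * real b * pi / (2 * real n)) * cos (real (2*i+1) * real a * pi / (2 * real n)))"
    by (rule sum.cong[OF refl], rule mult.commute)
  show ?thesis unfolding e h by (cases "a = b") simp_all
qed


lemma mat_inv_eqI:
  fixes A T :: "real mat"
  assumes A: "A \<in> carrier_mat k k" and T: "T \<in> carrier_mat k k"
    and AT: "A * T = 1\<^sub>m k" and TA: "T * A = 1\<^sub>m k"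
  shows "mat_inv A = T"
proof -
  have ex: "\<exists>B. B \<in> carrier_mat (dim_row A) (dim_row A) \<and> inverts_mat A B \<and> inverts_mat B A"
    using A T AT TA by (auto simp: inverts_mat_def)
  define B where "B = mat_inv A"
  have "B \<in> carrier_mat (dim_row A) (dim_row A) \<and> inverts_mat A B \<and> inverts_mat B A"
    unfolding B_def mat_inv_def by (rule someI_ex[OF ex])
  hence B: "B \<in> carrier_mat k k" and BA: "B * A = 1\<^sub>m k" using A by (auto simp: inverts_mat_def)
  have "B = B * (A * T)" using B AT by simp
  also have "\<dots> = (B * A) * T" using A B T by (simp add: assoc_mult_mat)
  also have "\<dots> = T" using BA T by simp
  finally show ?thesis unfolding B_def .
qed

lemma S_carrier: "S_mat n \<in> carrier_mat (n-1) (n-1)" by (simp add: S_mat_def)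
lemma C_carrier: "C_mat n \<in> carrier_mat n n" by (simp add: C_mat_def)
lemma B_carrier: "B_mat n \<in> carrier_mat (n-1) n" by (simp add: B_mat_def)
lemma G_carrier: "Gamma_mat n \<in> carrier_mat (n-1) n" by (simp add: Gamma_mat_def)

lemma SS:
  assumes "n \<ge> 2"
  shows "S_mat n * S_mat n = (real n / 2) \<cdot>\<^sub>m 1\<^sub>m (n-1)"
proof (rule eq_matI)
  fix i j assume i: "i < dim_row ((real n / 2) \<cdot>\<^sub>m 1\<^sub>m (n-1))" and j: "j < dim_col ((real n / 2) \<cdot>\<^sub>m 1\<^sub>m (n-1))"
  hence i': "i < n - 1" and j': "j < n - 1" by auto
  define f where "f k = sin (real (i+1) * real k * pi / real n) * sin (real (j+1) * real k * pi / real n)" for k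
  have "(S_mat n * S_mat n) $$ (i,j) = (\<Sum>k\<in>{0..<n-1}. S_mat n $$ (i,k) * S_mat n $$ (k,j))"
    using i' j' by (simp add: S_mat_def scalar_prod_def)
  also have "\<dots> = (\<Sum>k<n-1. f (Suc k))"
    using i' j' by (intro sum.cong) (auto simp: S_mat_def f_def mult.commute mult.left_commute)
  also have "\<dots> = f 0 + (\<Sum>k<n-1. f (Suc k))" by (simp add: f_def)
  also have "\<dots> = (\<Sum>k<Suc (n-1). f k)" by (rule sum.lessThan_Suc_shift[symmetric])
  also have "\<dots> = (\<Sum>k<n. f k)" using assms by simp
  also have "\<dots> = (if i+1 = j+1 then real n / 2 else 0)"
    unfolding f_def using i' j' by (intro S_orth) auto
  finally show "(S_mat n * S_mat n) $$ (i,j) = ((real n / 2) \<cdot>\<^sub>m 1\<^sub>m (n-1)) $$ (i,j)"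
    using i' j' by simp
qed (auto simp: S_mat_def)

lemma CtC:
  assumes "n \<ge> 2"
  shows "transpose_mat (C_mat n) * C_mat n = (real n / 2) \<cdot>\<^sub>m 1\<^sub>m n"
proof (rule eq_matI)
  fix a b assume a: "a < dim_row ((real n / 2) \<cdot>\<^sub>m 1\<^sub>m n)" and b: "b < dim_col ((real n / 2) \<cdot>\<^sub>m 1\<^sub>m n)"
  hence a': "a < n" and b': "b < n" by auto
  have "(transpose_mat (C_mat n) * C_mat n) $$ (a,b) = (\<Sum>i\<in>{0..<n}. C_mat n $$ (i,a) * C_mat n $$ (i,b))"
    using a' b' by (simp add: C_mat_def scalar_prod_def)
  also have "\<dots> = nu a * nu b * (\<Sum>i<n. cos (real (2*i+1) * real a * pi / (2 * real n)) * cos (real (2*i+1) * real b * pi / (2 * real n)))"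
    using a' b' by (auto simp: C_mat_def sum_distrib_left atLeast0LessThan intro!: sum.cong)
  also have "\<dots> = nu a * nu b * (if a = b then (if a = 0 then real n else real n / 2) else 0)"
    by (subst C_orth[OF a' b']) (rule refl)
  also have "\<dots> = (if a = b then real n / 2 else 0)"
    by (auto simp: nu_def)
  finally show "(transpose_mat (C_mat n) * C_mat n) $$ (a,b) = ((real n / 2) \<cdot>\<^sub>m 1\<^sub>m n) $$ (a,b)"
    using a' b' by simp
qed (auto simp: C_mat_def)

lemma BC:
  assumes "n \<ge> 2"
  shows "B_mat n * C_mat n = S_mat n * Gamma_mat n"
proof (rule eq_matI)
  fix i j assume i: "i < dim_row (S_mat n * Gamma_mat n)" and j: "j < dim_col (S_mat n * Gamma_mat n)"
  hence i': "i < n - 1" and j': "j < n" by (auto simp: S_mat_def Gamma_mat_def)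
  define c where "c k = C_mat n $$ (k,j)" for k
  have "(B_mat n * C_mat n) $$ (i,j) = (\<Sum>k\<in>{0..<n}. B_mat n $$ (i,k) * c k)"
    using i' j' by (simp add: B_mat_def C_mat_def scalar_prod_def c_def)
  also have "\<dots> = (\<Sum>k\<in>{0..<n}. (if k = i then - c k else 0) + (if k = i+1 then c k else 0))"
    using i' by (intro sum.cong) (auto simp: B_mat_def)
  also have "\<dots> = c (i+1) - c i"
    using i' by (simp add: sum.distrib less_diff_conv)
  finally have L: "(B_mat n * C_mat n) $$ (i,j) = c (i+1) - c i" .
  have "(S_mat n * Gamma_mat n) $$ (i,j) = (\<Sum>k\<in>{0..<n-1}. S_mat n $$ (i,k) * Gamma_mat n $$ (k,j))"
    using i' j' by (simp add: S_mat_def Gamma_mat_def scalar_prod_def)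
  also have "\<dots> = (\<Sum>k\<in>{0..<n-1}. if k = j - 1 \<and> 0 < j then S_mat n $$ (i,k) * tau n j else 0)"
    using i' j' by (intro sum.cong) (auto simp: Gamma_mat_def)
  finally have R: "(S_mat n * Gamma_mat n) $$ (i,j) = (\<Sum>k\<in>{0..<n-1}. if k = j - 1 \<and> 0 < j then S_mat n $$ (i,k) * tau n j else 0)" .
  show "(B_mat n * C_mat n) $$ (i,j) = (S_mat n * Gamma_mat n) $$ (i,j)"
  proof (cases "j = 0")
    case True
    then show ?thesis unfolding L R using i' j' by (simp add: c_def C_mat_def)
  next
    case False
    have R2: "(S_mat n * Gamma_mat n) $$ (i,j) = S_mat n $$ (i, j-1) * tau n j"
      unfolding R using False j' by (simp add: sum.delta')
    define X where "X = real (i+1) * real j * pi / real n"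
    define Y where "Y = real j * pi / (2 * real n)"
    have n0: "real n > 0" using assms by simp
    have e1: "real (2 * (i+1) + 1) * real j * pi / (2 * real n) = X + Y"
      using n0 by (simp add: X_def Y_def field_simps)
    have e2: "real (2 * i + 1) * real j * pi / (2 * real n) = X - Y"
      using n0 by (simp add: X_def Y_def field_simps)
    have "c (i+1) - c i = cos (X + Y) - cos (X - Y)"
      unfolding c_def using i' j' False by (simp only: C_mat_def index_mat e1[symmetric] e2[symmetric]) (simp add: nu_def)
    also have "\<dots> = sin X * (- 2 * sin Y)" by (simp add: cos_add cos_diff)
    also have "\<dots> = S_mat n $$ (i, j-1) * tau n j"
      using i' j' False by (simp add: S_mat_def tau_def X_def Y_def)
    finally show ?thesis unfolding L R2 .
  qed
qed (auto simp: B_mat_def C_mat_def S_mat_def Gamma_mat_def)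


theorem lemma2p1:
  fixes n :: nat
  assumes "n \<ge> 2"
  shows "invertible_mat (S_mat n) \<and> invertible_mat (C_mat n)
    \<and> mat_inv (S_mat n) * B_mat n * C_mat n = Gamma_mat n
    \<and> S_mat n * B_mat n * mat_inv (transpose_mat (C_mat n)) = Gamma_mat n"
proof -
  define m where "m = n - 1"
  define S where "S = S_mat n"
  define C where "C = C_mat n"
  define B where "B = B_mat n"
  define G where "G = Gamma_mat n"
  define T where "T = (2 / real n) \<cdot>\<^sub>m S"
  define U where "U = (2 / real n) \<cdot>\<^sub>m C"
  define V where "V = (2 / real n) \<cdot>\<^sub>m transpose_mat C"
  have n0: "real n > 0" using assms by simp
  have Sc: "S \<in> carrier_mat m m" unfolding S_def m_def by (rule S_carrier)
  have Cc: "C \<in> carrier_mat n n" unfolding C_def by (rule C_carrier)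
  have Bc: "B \<in> carrier_mat m n" unfolding B_def m_def by (rule B_carrier)
  have Gc: "G \<in> carrier_mat m n" unfolding G_def m_def by (rule G_carrier)
  have Tc: "T \<in> carrier_mat m m" using Sc by (simp add: T_def)
  have Uc: "U \<in> carrier_mat n n" using Cc by (simp add: U_def)
  have Ctc: "transpose_mat C \<in> carrier_mat n n" using Cc by simp
  have Vc: "V \<in> carrier_mat n n" using Cc by (simp add: V_def)
  have SS': "S * S = (real n / 2) \<cdot>\<^sub>m 1\<^sub>m m" unfolding S_def m_def using SS[OF assms] .
  have CtC': "transpose_mat C * C = (real n / 2) \<cdot>\<^sub>m 1\<^sub>m n" unfolding C_def using CtC[OF assms] .
  have BC': "B * C = S * G" unfolding B_def C_def S_def G_def using BC[OF assms] .
  have ST: "S * T = 1\<^sub>m m"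
  proof -
    have "S * T = (2 / real n) \<cdot>\<^sub>m (S * S)" unfolding T_def using Sc by (simp add: mult_smult_distrib)
    also have "\<dots> = 1\<^sub>m m" unfolding SS' using n0 by (intro eq_matI) auto
    finally show ?thesis .
  qed
  have TS: "T * S = 1\<^sub>m m"
  proof -
    have "T * S = (2 / real n) \<cdot>\<^sub>m (S * S)" unfolding T_def using Sc by (simp add: mult_smult_assoc_mat)
    also have "\<dots> = 1\<^sub>m m" unfolding SS' using n0 by (intro eq_matI) auto
    finally show ?thesis .
  qed
  have CtU: "transpose_mat C * U = 1\<^sub>m n"
  proof -
    have "transpose_mat C * U = (2 / real n) \<cdot>\<^sub>m (transpose_mat C * C)" unfolding U_def using Cc Ctc by (simp add: mult_smult_distrib)
    also have "\<dots> = 1\<^sub>m n" unfolding CtC' using n0 by (intro eq_matI) auto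
    finally show ?thesis .
  qed
  have UCt: "U * transpose_mat C = 1\<^sub>m n" by (rule mat_mult_left_right_inverse[OF Ctc Uc CtU])
  have VC: "V * C = 1\<^sub>m n"
  proof -
    have "V * C = (2 / real n) \<cdot>\<^sub>m (transpose_mat C * C)" unfolding V_def using Cc Ctc by (simp add: mult_smult_assoc_mat)
    also have "\<dots> = 1\<^sub>m n" unfolding CtC' using n0 by (intro eq_matI) auto
    finally show ?thesis .
  qed
  have CV: "C * V = 1\<^sub>m n" by (rule mat_mult_left_right_inverse[OF Vc Cc VC])
  have invS: "invertible_mat S"
    unfolding invertible_mat_def inverts_mat_def using Sc Tc ST TS by (auto simp: square_mat.simps)
  have invC: "invertible_mat C"
    unfolding invertible_mat_def inverts_mat_def using Cc Vc CV VC by (auto simp: square_mat.simps)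
  have miS: "mat_inv S = T" by (rule mat_inv_eqI[OF Sc Tc ST TS])
  have miC: "mat_inv (transpose_mat C) = U" by (rule mat_inv_eqI[OF Ctc Uc CtU UCt])
  have e1: "mat_inv S * B * C = G"
  proof -
    have "mat_inv S * B * C = T * (B * C)" unfolding miS using Tc Bc Cc by (simp add: assoc_mult_mat)
    also have "\<dots> = (T * S) * G" unfolding BC' using Tc Sc Gc by (simp add: assoc_mult_mat)
    also have "\<dots> = G" unfolding TS using Gc by simp
    finally show ?thesis .
  qed
  have e2: "S * B * mat_inv (transpose_mat C) = G"
  proof -
    have "S * B * mat_inv (transpose_mat C) = S * (B * U)" unfolding miC using Sc Bc Uc by (simp add: assoc_mult_mat)
    also have "B * U = (2 / real n) \<cdot>\<^sub>m (B * C)" unfolding U_def using Bc Cc by (simp add: mult_smult_distrib)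
    also have "\<dots> = (2 / real n) \<cdot>\<^sub>m (S * G)" unfolding BC' ..
    also have "\<dots> = T * G" unfolding T_def using Sc Gc by (simp add: mult_smult_assoc_mat)
    also have "S * (T * G) = (S * T) * G" using Sc Tc Gc by (simp add: assoc_mult_mat)
    also have "\<dots> = G" unfolding ST using Gc by simp
    finally show ?thesis .
  qed
  show ?thesis using invS invC e1 e2 unfolding S_def C_def B_def G_def by blast
qed

end
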